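(* For every $\beta>1$ and $\boldsymbol\theta_0\in\Theta_1$, the function $M_\infty:[-1,1]\times\Theta_1\to\mathbb R$, $$M_\infty(u,\boldsymbol\theta)=\frac{\boldsymbol\theta^\top\boldsymbol\theta}2+\frac{\beta u^2}2-\mathbb E_{\boldsymbol\theta_0}\log\cosh(\beta u+\boldsymbol\theta^\top\mathbf X),$$ is uniquely minimized at $(u,\boldsymbol\theta)=(m,\boldsymbol\theta_0)$.
   Context: $m=m(\beta)$ is the unique positive root of $m=\tanh(\beta m)$. $\mathbb E_{\boldsymbol\theta_0}$ denotes expectation with $\mathbf X\sim\frac{1+m}2N_d(\boldsymbol\theta_0,\mathbf I_d)+\frac{1-m}2N_d(-\boldsymbol\theta_0,\mathbf I_d)$. $\Theta_1$ is the lexicographically positive half-space $\{\theta_1>0\}\cup\{\theta_1=0,\theta_2>0\}\cup\cdots\cup\{\theta_1=\cdots=\theta_{d-1}=0,\theta_d>0\}$. *)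

theory Defs
  imports "HOL-Analysis.Analysis"
begin

text \<open>Curie-Weiss magnetization: the unique positive root of m = tanh(beta m) (beta > 1).\<close>
definition mag :: "real \<Rightarrow> real" where
  "mag \<beta> = (THE m. m > 0 \<and> m = tanh (\<beta> * m))"

definition std_gauss_density :: "real ^ 'n \<Rightarrow> real" where
  "std_gauss_density x =
     (2 * pi) powr (- real CARD('n) / 2) * exp (- (norm x)\<^sup>2 / 2)"

definition mix_density :: "real \<Rightarrow> real ^ 'n \<Rightarrow> real ^ 'n \<Rightarrow> real" where
  "mix_density \<beta> \<theta>0 x =
     (1 + mag \<beta>) / 2 * std_gauss_density (x - \<theta>0)
   + (1 - mag \<beta>) / 2 * std_gauss_density (x + \<theta>0)"

definition mix_expect :: "real \<Rightarrow> real ^ 'n \<Rightarrow> (real ^ 'n \<Rightarrow> real) \<Rightarrow> real" where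
  "mix_expect \<beta> \<theta>0 f = (\<integral>x. f x * mix_density \<beta> \<theta>0 x \<partial>lborel)"

text \<open>Lexicographically positive half-space (coordinates ordered by the linear order on 'n).\<close>
definition Theta1 :: "(real ^ 'n::{finite,linorder}) set" where
  "Theta1 = {\<theta>. \<exists>i. \<theta> $ i > 0 \<and> (\<forall>j<i. \<theta> $ j = 0)}"

definition M_infty :: "real \<Rightarrow> real ^ 'n \<Rightarrow> real \<Rightarrow> real ^ 'n \<Rightarrow> real" where
  "M_infty \<beta> \<theta>0 u \<theta> =
     (\<theta> \<bullet> \<theta>) / 2 + \<beta> * u\<^sup>2 / 2
     - mix_expect \<beta> \<theta>0 (\<lambda>x. ln (cosh (\<beta> * u + \<theta> \<bullet> x)))"

end

theory Submission imports Defs "HOL-Probability.Probability" begin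


lemma lborel_prod:
  fixes f :: "'a::euclidean_space \<Rightarrow> real \<Rightarrow> real"
  assumes int: "\<And>b. b \<in> Basis \<Longrightarrow> integrable lborel (f b)"
  shows "integrable lborel (\<lambda>x::'a. \<Prod>b\<in>Basis. f b (x \<bullet> b))"
    and "(\<integral>x. (\<Prod>b\<in>Basis. f b (x \<bullet> b)) \<partial>lborel) = (\<Prod>b\<in>Basis. \<integral>t. f b t \<partial>lborel)"
proof -
  interpret product_sigma_finite "\<lambda>_. lborel" by standard
  let ?g = "\<lambda>y. \<Sum>b\<in>Basis. y b *\<^sub>R (b::'a)"
  have gm: "?g \<in> measurable (\<Pi>\<^sub>M b\<in>Basis. lborel) borel" by measurable
  have fm: "\<And>b. b \<in> Basis \<Longrightarrow> f b \<in> borel_measurable lborel" using int by auto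
  have Fm: "(\<lambda>x::'a. \<Prod>b\<in>Basis. f b (x \<bullet> b)) \<in> borel_measurable borel"
    using fm by (intro borel_measurable_prod) (auto simp: measurable_lborel1)
  have eq: "\<And>y. (\<Prod>b\<in>Basis. f b (?g y \<bullet> b)) = (\<Prod>b\<in>Basis. f b (y b))"
    by (intro prod.cong refl) (simp add: inner_sum_left inner_Basis if_distrib sum.delta cong: if_cong)
  have pi: "integrable (\<Pi>\<^sub>M b\<in>Basis. lborel) (\<lambda>y. \<Prod>b\<in>Basis. f b (y b))"
    by (rule product_integrable_prod) (auto intro: int)
  show "integrable lborel (\<lambda>x::'a. \<Prod>b\<in>Basis. f b (x \<bullet> b))"
    apply (subst lborel_eq)
    apply (subst integrable_distr_eq[OF gm Fm])
    using pi by (simp add: eq)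
  show "(\<integral>x. (\<Prod>b\<in>Basis. f b (x \<bullet> b)) \<partial>lborel) = (\<Prod>b\<in>Basis. \<integral>t. f b t \<partial>lborel)"
    apply (subst lborel_eq)
    apply (subst integral_distr[OF gm Fm])
    apply (simp add: eq)
    by (rule product_integral_prod) (auto intro: int)
qed


lemma gauss_prod:
  "std_gauss_density (x::real^'n) = (\<Prod>b\<in>Basis. std_normal_density (x \<bullet> b))"
proof -
  have c: "card (Basis :: (real^'n) set) = CARD('n)" by simp
  have n2: "(norm x)\<^sup>2 = (\<Sum>b\<in>Basis. (x \<bullet> b)\<^sup>2)"
    unfolding power2_norm_eq_inner by (subst euclidean_inner) (simp add: power2_eq_square)
  have "(1 / sqrt (2*pi)) ^ CARD('n) = ((2*pi) powr (-1/2)) ^ CARD('n)"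
    by (simp add: powr_minus_divide powr_half_sqrt)
  also have "\<dots> = ((2*pi) powr (-1/2)) powr real CARD('n)"
    by (subst powr_realpow) auto
  also have "\<dots> = (2 * pi) powr (- real CARD('n) / 2)"
    by (simp add: powr_powr)
  finally have "(2 * pi) powr (- real CARD('n) / 2) = (1 / sqrt (2*pi)) ^ CARD('n)" by simp
  moreover have "exp (- (norm x)\<^sup>2 / 2) = (\<Prod>b\<in>Basis. exp (- (x \<bullet> b)\<^sup>2 / 2))"
  proof -
    have "- (norm x)\<^sup>2 / 2 = (\<Sum>b\<in>Basis. - (x \<bullet> b)\<^sup>2 / 2)"
      by (simp add: n2 sum_negf sum_divide_distrib)
    then show ?thesis by (simp add: exp_sum)
  qed
  ultimately show ?thesis
    unfolding std_gauss_density_def std_normal_density_def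
    by (simp add: prod_dividef c power_one_over)
qed

lemma gauss_integrable: "integrable lborel (std_gauss_density :: real^'n \<Rightarrow> real)"
  unfolding gauss_prod by (rule lborel_prod) simp

lemma gauss_integral: "(\<integral>x. std_gauss_density (x::real^'n) \<partial>lborel) = 1"
  unfolding gauss_prod by (subst lborel_prod(2)) auto

lemma gauss_pos: "std_gauss_density x > 0"
  unfolding std_gauss_density_def by simp

lemma gauss_cont: "continuous_on UNIV std_gauss_density"
  unfolding std_gauss_density_def by (intro continuous_intros) auto

lemma gauss_meas[measurable]: "std_gauss_density \<in> borel_measurable borel"
  by (rule borel_measurable_continuous_onI[OF gauss_cont])

lemma gauss_abs_comp_integrable:
  assumes "c \<in> Basis"
  shows "integrable lborel (\<lambda>x::real^'n. std_gauss_density x * \<bar>x \<bullet> c\<bar>)"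
proof -
  have "integrable lborel (\<lambda>x::real^'n. \<Prod>b\<in>Basis. (\<lambda>t. std_normal_density t * (if b = c then \<bar>t\<bar> else 1)) (x \<bullet> b))"
    apply (rule lborel_prod)
    subgoal for b using integrable_std_normal_moment_abs[of 1] by (cases "b = c") auto
    done
  moreover have "(\<Prod>b\<in>Basis. (\<lambda>t. std_normal_density t * (if b = c then \<bar>t\<bar> else 1)) (x \<bullet> b))
     = std_gauss_density x * \<bar>x \<bullet> c\<bar>" for x :: "real^'n"
    unfolding gauss_prod prod.distrib using assms
    by (simp add: prod.If_cases Int_absorb1 prod.delta)
  ultimately show ?thesis by simp
qed

lemma gauss_norm_integrable:
  "integrable lborel (\<lambda>x::real^'n. std_gauss_density x * norm x)"
proof -
  have i1: "integrable lborel (\<lambda>x::real^'n. \<Sum>c\<in>Basis. std_gauss_density x * \<bar>x \<bullet> c\<bar>)"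
    by (intro Bochner_Integration.integrable_sum) (auto intro: gauss_abs_comp_integrable)
  have m: "(\<lambda>x::real^'n. std_gauss_density x * norm x) \<in> borel_measurable lborel" by measurable
  have ae: "AE x in lborel. norm (std_gauss_density x * norm (x::real^'n)) \<le> norm (\<Sum>c\<in>Basis. std_gauss_density x * \<bar>x \<bullet> c\<bar>)"
  proof (intro AE_I2)
    fix x :: "real^'n"
    have "std_gauss_density x * norm x \<le> std_gauss_density x * (\<Sum>c\<in>Basis. \<bar>x \<bullet> c\<bar>)"
      using gauss_pos[of x] norm_le_l1[of x] by (intro mult_left_mono) auto
    then show "norm (std_gauss_density x * norm x) \<le> norm (\<Sum>c\<in>Basis. std_gauss_density x * \<bar>x \<bullet> c\<bar>)"
      using gauss_pos[of x] by (simp add: sum_distrib_left sum_nonneg)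
  qed
  show ?thesis by (rule Bochner_Integration.integrable_bound[OF i1 m ae])
qed

lemma shift_integrable:
  fixes f :: "'a::euclidean_space \<Rightarrow> real"
  assumes "integrable lborel f"
  shows "integrable lborel (\<lambda>x. f (x + c))" and "(\<integral>x. f (x + c) \<partial>lborel) = (\<integral>x. f x \<partial>lborel)"
proof -
  have fm: "f \<in> borel_measurable borel" using assms by auto
  have gm: "(+) c \<in> measurable lborel borel" by simp
  have "integrable (distr lborel borel ((+) c)) f" using assms by (simp add: lborel_distr_plus)
  then show "integrable lborel (\<lambda>x. f (x + c))"
    by (subst (asm) integrable_distr_eq[OF gm fm]) (simp add: add.commute)
  have "(\<integral>x. f x \<partial>lborel) = (\<integral>x. f x \<partial>(distr lborel borel ((+) c)))" by (simp add: lborel_distr_plus)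
  also have "\<dots> = (\<integral>x. f (c + x) \<partial>lborel)" by (rule integral_distr[OF gm fm])
  finally show "(\<integral>x. f (x + c) \<partial>lborel) = (\<integral>x. f x \<partial>lborel)" by (simp add: add.commute)
qed



lemma cosh_meas[measurable]: "(cosh :: real \<Rightarrow> real) \<in> borel_measurable borel"
  by (rule borel_measurable_continuous_onI) (intro continuous_intros)

definition Dn :: "real \<Rightarrow> real^'n \<Rightarrow> real^'n \<Rightarrow> real" where
  "Dn a \<theta> x = std_gauss_density x * cosh (a + \<theta> \<bullet> x) / (cosh a * exp (\<theta> \<bullet> \<theta> / 2))"

lemma gauss_shift:
  "std_gauss_density (x - \<theta>) = std_gauss_density x * exp (\<theta> \<bullet> x) * exp (- (\<theta> \<bullet> \<theta>) / 2)"
proof -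
  have n: "(norm (x - \<theta>))\<^sup>2 = (norm x)\<^sup>2 - 2 * (\<theta> \<bullet> x) + \<theta> \<bullet> \<theta>"
    by (simp add: power2_norm_eq_inner inner_diff_left inner_diff_right inner_commute)
  have e1: "- (norm (x - \<theta>))\<^sup>2 / 2 = - (norm x)\<^sup>2 / 2 + \<theta> \<bullet> x + - (\<theta> \<bullet> \<theta>) / 2"
    by (simp add: n field_simps)
  show ?thesis unfolding std_gauss_density_def e1 exp_add by (simp add: mult_ac)
qed

lemma Dn_alt:
  "Dn a \<theta> x = (exp a * std_gauss_density (x - \<theta>) + exp (-a) * std_gauss_density (x + \<theta>)) / (2 * cosh a)"
proof -
  have p: "std_gauss_density (x + \<theta>) = std_gauss_density x * exp (- (\<theta> \<bullet> x)) * exp (- (\<theta> \<bullet> \<theta>) / 2)"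
    using gauss_shift[of x "-\<theta>"] by simp
  have e: "exp (- (\<theta> \<bullet> \<theta>) / 2) = 1 / exp (\<theta> \<bullet> \<theta> / 2)" by (simp add: exp_minus field_simps)
  have c: "cosh (a + \<theta> \<bullet> x) = (exp a * exp (\<theta> \<bullet> x) + exp (-a) * exp (- (\<theta> \<bullet> x))) / 2"
    by (simp add: cosh_field_def exp_add[symmetric])
  show ?thesis unfolding Dn_def gauss_shift p e c by (simp add: field_simps)
qed

lemma Dn_pos: "Dn a \<theta> x > 0"
  unfolding Dn_def using gauss_pos[of x] by (intro divide_pos_pos mult_pos_pos) auto

lemma Dn_cont: "continuous_on UNIV (Dn a \<theta>)"
proof -
  have "continuous_on UNIV (\<lambda>x. std_gauss_density x * cosh (a + \<theta> \<bullet> x) / (cosh a * exp (\<theta> \<bullet> \<theta> / 2)))"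
    by (intro continuous_intros gauss_cont) auto
  then show ?thesis unfolding Dn_def[abs_def] .
qed

lemma Dn_meas[measurable]: "Dn a \<theta> \<in> borel_measurable borel"
  by (rule borel_measurable_continuous_onI[OF Dn_cont])

lemma gauss_shift_int: "integrable lborel (\<lambda>x. std_gauss_density (x + c))"
  "(\<integral>x. std_gauss_density (x + c) \<partial>lborel) = 1"
  using shift_integrable[OF gauss_integrable, of c] gauss_integral by auto

lemma gauss_shift_int2: "integrable lborel (\<lambda>x. std_gauss_density (x - c))"
  "(\<integral>x. std_gauss_density (x - c) \<partial>lborel) = 1"
  using gauss_shift_int[of "-c"] by auto

lemma Dn_integrable: "integrable lborel (Dn a \<theta>)"
proof -
  have "integrable lborel (\<lambda>x. (exp a * std_gauss_density (x + (-\<theta>)) + exp (-a) * std_gauss_density (x + \<theta>)) / (2 * cosh a))"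
    using gauss_shift_int gauss_shift_int2 by (intro integrable_divide Bochner_Integration.integrable_add integrable_mult_right) auto
  then show ?thesis unfolding Dn_alt[abs_def] by simp
qed

lemma Dn_integral: "(\<integral>x. Dn a \<theta> x \<partial>lborel) = 1"
proof -
  have "(\<integral>x. Dn a \<theta> x \<partial>lborel) = (\<integral>x. (exp a * std_gauss_density (x + (-\<theta>)) + exp (-a) * std_gauss_density (x + \<theta>)) / (2 * cosh a) \<partial>lborel)"
    unfolding Dn_alt by simp
  also have "\<dots> = (exp a * 1 + exp (-a) * 1) / (2 * cosh a)"
  proof -
    have i: "integrable lborel (\<lambda>x. exp a * std_gauss_density (x + (-\<theta>)))"
            "integrable lborel (\<lambda>x. exp (-a) * std_gauss_density (x + \<theta>))"
      using gauss_shift_int gauss_shift_int2 by auto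
    have j: "(\<integral>x. exp a * std_gauss_density (x + (-\<theta>)) \<partial>lborel) = exp a * 1"
            "(\<integral>x. exp (-a) * std_gauss_density (x + \<theta>) \<partial>lborel) = exp (-a) * 1"
      using gauss_shift_int(2)[of "-\<theta>"] gauss_shift_int(2)[of \<theta>] by (simp_all only: integral_mult_right_zero)
    show ?thesis
      by (simp only: integral_divide_zero Bochner_Integration.integral_add[OF i] j)
  qed
  also have "\<dots> = 1"
  proof -
    have "exp a + exp (-a) > 0" by (intro add_pos_pos) auto
    then show ?thesis by (simp add: cosh_field_def)
  qed
  finally show ?thesis .
qed

lemma gauss_norm_shift_integrable:
  "integrable lborel (\<lambda>x::real^'n. std_gauss_density (x + c) * norm x)"
proof -
  have i1: "integrable lborel (\<lambda>y::real^'n. std_gauss_density y * norm y + norm c * std_gauss_density y)"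
    using gauss_norm_integrable gauss_integrable by auto
  have m: "(\<lambda>y::real^'n. std_gauss_density y * norm (y - c)) \<in> borel_measurable lborel" by measurable
  have ae: "AE y in lborel. norm (std_gauss_density y * norm (y - c)) \<le> norm (std_gauss_density y * norm y + norm c * std_gauss_density y)"
  proof (intro AE_I2)
    fix y :: "real^'n"
    have "std_gauss_density y * norm (y - c) \<le> std_gauss_density y * (norm y + norm c)"
      using gauss_pos[of y] norm_triangle_ineq4[of y c] by (intro mult_left_mono) auto
    then show "norm (std_gauss_density y * norm (y - c)) \<le> norm (std_gauss_density y * norm y + norm c * std_gauss_density y)"
      using gauss_pos[of y] by (simp add: algebra_simps)
  qed
  have "integrable lborel (\<lambda>y::real^'n. std_gauss_density y * norm (y - c))"
    by (rule Bochner_Integration.integrable_bound[OF i1 m ae])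
  from shift_integrable(1)[OF this, of c] show ?thesis by simp
qed

lemma gauss_norm_shift_integrable2:
  "integrable lborel (\<lambda>x::real^'n. std_gauss_density (x - c) * norm x)"
  using gauss_norm_shift_integrable[of "-c"] by simp

lemma Dn_norm_integrable: "integrable lborel (\<lambda>x. Dn a \<theta> x * norm x)"
proof -
  have "integrable lborel (\<lambda>x. (exp a * (std_gauss_density (x + (-\<theta>)) * norm x) + exp (-a) * (std_gauss_density (x + \<theta>) * norm x)) / (2 * cosh a))"
    using gauss_norm_shift_integrable gauss_norm_shift_integrable2
    by (intro integrable_divide Bochner_Integration.integrable_add integrable_mult_right) auto
  then show ?thesis unfolding Dn_alt[abs_def] by (simp add: algebra_simps add_divide_distrib)
qed

lemma ln_cosh_bounds: "0 \<le> ln (cosh y) \<and> ln (cosh y) \<le> \<bar>y::real\<bar>"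
proof
  show "0 \<le> ln (cosh y)" using cosh_real_ge_1[of y] by simp
  have "cosh y = (exp \<bar>y\<bar> + exp (- \<bar>y\<bar>)) / 2" by (metis cosh_real_abs cosh_field_def)
  also have "\<dots> \<le> exp \<bar>y\<bar>" by simp
  finally have "ln (cosh y) \<le> ln (exp \<bar>y\<bar>)" by (subst ln_le_cancel_iff) auto
  then show "ln (cosh y) \<le> \<bar>y\<bar>" by simp
qed

lemma lncosh_Dn_integrable:
  "integrable lborel (\<lambda>x. ln (cosh (b + t \<bullet> x)) * Dn a \<theta> x)"
proof -
  have i1: "integrable lborel (\<lambda>x. \<bar>b\<bar> * Dn a \<theta> x + norm t * (Dn a \<theta> x * norm x))"
    using Dn_integrable Dn_norm_integrable by (intro Bochner_Integration.integrable_add integrable_mult_right)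
  have m: "(\<lambda>x. ln (cosh (b + t \<bullet> x)) * Dn a \<theta> x) \<in> borel_measurable lborel" by measurable
  have ae: "AE x in lborel. norm (ln (cosh (b + t \<bullet> x)) * Dn a \<theta> x) \<le> norm (\<bar>b\<bar> * Dn a \<theta> x + norm t * (Dn a \<theta> x * norm x))"
  proof (intro AE_I2)
    fix x
    have "ln (cosh (b + t \<bullet> x)) \<le> \<bar>b\<bar> + norm t * norm x"
      using ln_cosh_bounds[of "b + t \<bullet> x"] abs_triangle_ineq[of b "t \<bullet> x"] Cauchy_Schwarz_ineq2[of t x]
      by linarith
    then have "ln (cosh (b + t \<bullet> x)) * Dn a \<theta> x \<le> (\<bar>b\<bar> + norm t * norm x) * Dn a \<theta> x"
      using Dn_pos[of a \<theta> x] by (intro mult_right_mono) auto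
    then show "norm (ln (cosh (b + t \<bullet> x)) * Dn a \<theta> x) \<le> norm (\<bar>b\<bar> * Dn a \<theta> x + norm t * (Dn a \<theta> x * norm x))"
      using Dn_pos[of a \<theta> x] ln_cosh_bounds[of "b + t \<bullet> x"] by (simp add: algebra_simps)
  qed
  show ?thesis by (rule Bochner_Integration.integrable_bound[OF i1 m ae])
qed

lemma mix_Dn:
  assumes "mag \<beta> = tanh (\<beta> * mag \<beta>)"
  shows "mix_density \<beta> \<theta>0 x = Dn (\<beta> * mag \<beta>) \<theta>0 x"
proof -
  let ?a = "\<beta> * mag \<beta>"
  have 1: "(1 + mag \<beta>) / 2 = exp ?a / (2 * cosh ?a)"
    by (subst assms) (simp add: tanh_def field_simps cosh_plus_sinh)
  have 2: "(1 - mag \<beta>) / 2 = exp (-?a) / (2 * cosh ?a)"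
    by (subst assms) (simp add: tanh_def field_simps cosh_minus_sinh)
  show ?thesis unfolding mix_density_def 1 2 Dn_alt by (simp add: field_simps)
qed



definition fz :: "real \<Rightarrow> real \<Rightarrow> real" where "fz \<beta> x = tanh (\<beta> * x) - x"

lemma fz_deriv: "DERIV (fz \<beta>) x :> \<beta> * (1 - tanh (\<beta> * x) ^ 2) - 1"
  unfolding fz_def[abs_def] by (auto intro!: derivative_eq_intros)

lemma fz_cont: "isCont (fz \<beta>) x"
  using fz_deriv DERIV_isCont by blast

lemma fz_two_roots:
  assumes b: "\<beta> > 1" and ab: "0 < a" "a < c" and fa: "fz \<beta> a = 0" and fc: "fz \<beta> c = 0"
  shows False
proof -
  let ?d = "\<lambda>x. \<beta> * (1 - tanh (\<beta> * x) ^ 2) - 1"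
  obtain z1 where z1: "0 < z1" "z1 < a" "fz \<beta> a - fz \<beta> 0 = (a - 0) * ?d z1"
    using MVT2[of 0 a "fz \<beta>" ?d] ab fz_deriv by blast
  obtain z2 where z2: "a < z2" "z2 < c" "fz \<beta> c - fz \<beta> a = (c - a) * ?d z2"
    using MVT2[of a c "fz \<beta>" ?d] ab fz_deriv by blast
  have "?d z1 = 0" using z1 fa ab by (simp add: fz_def)
  moreover have "?d z2 = 0" using z2 fa fc ab by simp
  ultimately have "\<beta> * (1 - tanh (\<beta> * z1) ^ 2) = \<beta> * (1 - tanh (\<beta> * z2) ^ 2)" by simp
  then have e: "tanh (\<beta> * z1) ^ 2 = tanh (\<beta> * z2) ^ 2" using b by simp
  have "0 < \<beta> * z1" "\<beta> * z1 < \<beta> * z2" using z1 z2 b by auto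
  then have "0 < tanh (\<beta> * z1)" "tanh (\<beta> * z1) < tanh (\<beta> * z2)"
    using tanh_real_strict_mono by (auto simp: strict_mono_def)
  then have "tanh (\<beta> * z1) ^ 2 < tanh (\<beta> * z2) ^ 2"
    by (intro power_strict_mono) auto
  with e show False by simp
qed

lemma fz_near0:
  assumes b: "\<beta> > 1"
  shows "\<exists>d>0. \<forall>h>0. h < d \<longrightarrow> fz \<beta> h > 0"
proof -
  have "DERIV (fz \<beta>) 0 :> \<beta> - 1" using fz_deriv[of \<beta> 0] by simp
  from DERIV_pos_inc_right[OF this] b obtain d where "d > 0" "\<forall>h>0. h < d \<longrightarrow> fz \<beta> 0 < fz \<beta> (0 + h)"
    by auto
  then show ?thesis by (auto simp: fz_def)
qed

lemma fz_exists:
  assumes b: "\<beta> > 1"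
  shows "\<exists>m>0. fz \<beta> m = 0"
proof -
  obtain d where d: "d > 0" "\<forall>h>0. h < d \<longrightarrow> fz \<beta> h > 0" using fz_near0[OF b] by blast
  define c where "c = min (d/2) (1/2)"
  have c: "0 < c" "c < d" "c \<le> 1" using d by (auto simp: c_def)
  have "fz \<beta> c > 0" using d c by auto
  moreover have "fz \<beta> 1 < 0" using tanh_real_lt_1[of \<beta>] by (simp add: fz_def)
  ultimately obtain x where "c \<le> x" "x \<le> 1" "fz \<beta> x = 0"
    using IVT2[of "fz \<beta>" 1 0 c] c fz_cont by force
  then have "x > 0 \<and> fz \<beta> x = 0" using c by auto
  then show ?thesis by blast
qed

lemma mag_props:
  assumes b: "\<beta> > 1"
  shows "mag \<beta> > 0" "mag \<beta> = tanh (\<beta> * mag \<beta>)" "fz \<beta> (mag \<beta>) = 0"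
    and "\<And>y. y > 0 \<Longrightarrow> fz \<beta> y = 0 \<Longrightarrow> y = mag \<beta>"
proof -
  have uniq: "\<And>x y. x > 0 \<Longrightarrow> fz \<beta> x = 0 \<Longrightarrow> y > 0 \<Longrightarrow> fz \<beta> y = 0 \<Longrightarrow> x = y"
  proof (rule ccontr)
    fix x y :: real assume h: "x > 0" "fz \<beta> x = 0" "y > 0" "fz \<beta> y = 0" "x \<noteq> y"
    show False
    proof (cases "x < y")
      case True then show ?thesis using fz_two_roots[OF b, of x y] h by auto
    next
      case False then show ?thesis using fz_two_roots[OF b, of y x] h by auto
    qed
  qed
  obtain m where m: "m > 0" "fz \<beta> m = 0" using fz_exists[OF b] by blast
  have eq: "mag \<beta> = m" unfolding mag_def
    apply (rule the_equality)
    using m uniq by (auto simp: fz_def)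
  show "mag \<beta> > 0" "fz \<beta> (mag \<beta>) = 0" using m eq by auto
  then show "mag \<beta> = tanh (\<beta> * mag \<beta>)" by (simp add: fz_def)
  show "\<And>y. y > 0 \<Longrightarrow> fz \<beta> y = 0 \<Longrightarrow> y = mag \<beta>" using uniq m eq by auto
qed

lemma fz_sign:
  assumes b: "\<beta> > 1"
  shows "\<And>x. 0 < x \<Longrightarrow> x < mag \<beta> \<Longrightarrow> fz \<beta> x > 0"
    and "\<And>x. mag \<beta> < x \<Longrightarrow> fz \<beta> x < 0"
proof -
  note mp = mag_props[OF b]
  fix x assume x: "0 < x" "x < mag \<beta>"
  show "fz \<beta> x > 0"
  proof (rule ccontr)
    assume "\<not> fz \<beta> x > 0" then have fx: "fz \<beta> x \<le> 0" by simp
    obtain d where d: "d > 0" "\<forall>h>0. h < d \<longrightarrow> fz \<beta> h > 0" using fz_near0[OF b] by blast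
    define c where "c = min x d / 2"
    have c: "0 < c" "c < d" "c < x" using d x by (auto simp: c_def)
    then have "fz \<beta> c > 0" using d by auto
    then obtain z where "c \<le> z" "z \<le> x" "fz \<beta> z = 0"
      using IVT2[of "fz \<beta>" x 0 c] c fx fz_cont by force
    then show False using mp(4)[of z] c x by auto
  qed
next
  note mp = mag_props[OF b]
  fix x assume x: "mag \<beta> < x"
  show "fz \<beta> x < 0"
  proof (rule ccontr)
    assume "\<not> fz \<beta> x < 0" then have fx: "fz \<beta> x \<ge> 0" by simp
    have "x < 1"
    proof (rule ccontr)
      assume "\<not> x < 1"
      then show False using fx tanh_real_lt_1[of "\<beta> * x"] by (simp add: fz_def)
    qed
    have "fz \<beta> 1 < 0" using tanh_real_lt_1[of \<beta>] by (simp add: fz_def)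
    then obtain z where "x \<le> z" "z \<le> 1" "fz \<beta> z = 0"
      using IVT2[of "fz \<beta>" 1 0 x] \<open>x < 1\<close> fx fz_cont by force
    then show False using mp(4)[of z] mp(1) x by auto
  qed
qed

definition gC :: "real \<Rightarrow> real \<Rightarrow> real" where "gC \<beta> u = \<beta> * u\<^sup>2 / 2 - ln (cosh (\<beta> * u))"

lemma gC_deriv: "DERIV (gC \<beta>) x :> - \<beta> * fz \<beta> x"
  unfolding gC_def[abs_def] fz_def
  by (auto intro!: derivative_eq_intros simp: tanh_def field_simps power2_eq_square)

lemma gC_even: "gC \<beta> (-u) = gC \<beta> u"
  unfolding gC_def by simp

lemma gC_min_pos:
  assumes b: "\<beta> > 1" and u: "u \<ge> 0" "u \<noteq> mag \<beta>"
  shows "gC \<beta> u > gC \<beta> (mag \<beta>)"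
proof (cases "u < mag \<beta>")
  case True
  obtain z where z: "u < z" "z < mag \<beta>" "gC \<beta> (mag \<beta>) - gC \<beta> u = (mag \<beta> - u) * (- \<beta> * fz \<beta> z)"
    using MVT2[of u "mag \<beta>" "gC \<beta>" "\<lambda>x. - \<beta> * fz \<beta> x"] True gC_deriv by blast
  have "fz \<beta> z > 0" using fz_sign(1)[OF b, of z] z u by auto
  then have "(mag \<beta> - u) * (\<beta> * fz \<beta> z) > 0" using True b
    by (intro mult_pos_pos) auto
  then have "(mag \<beta> - u) * (- \<beta> * fz \<beta> z) < 0" by simp
  then show ?thesis using z by simp
next
  case False
  then have lt: "mag \<beta> < u" using u by simp
  obtain z where z: "mag \<beta> < z" "z < u" "gC \<beta> u - gC \<beta> (mag \<beta>) = (u - mag \<beta>) * (- \<beta> * fz \<beta> z)"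
    using MVT2[of "mag \<beta>" u "gC \<beta>" "\<lambda>x. - \<beta> * fz \<beta> x"] lt gC_deriv by blast
  have "fz \<beta> z < 0" using fz_sign(2)[OF b, of z] z by auto
  then have "(u - mag \<beta>) * (\<beta> * (- fz \<beta> z)) > 0" using lt b
    by (intro mult_pos_pos) auto
  then have "(u - mag \<beta>) * (- \<beta> * fz \<beta> z) > 0" by simp
  then show ?thesis using z by simp
qed

lemma gC_min:
  assumes b: "\<beta> > 1" and u: "u \<noteq> mag \<beta>" "u \<noteq> - mag \<beta>"
  shows "gC \<beta> u > gC \<beta> (mag \<beta>)"
proof (cases "u \<ge> 0")
  case True then show ?thesis using gC_min_pos[OF b] u by auto
next
  case False
  then have "gC \<beta> (-u) > gC \<beta> (mag \<beta>)" using gC_min_pos[OF b, of "-u"] u by auto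
  then show ?thesis by (simp add: gC_even)
qed



lemma pos_integral:
  fixes h :: "'a::euclidean_space \<Rightarrow> real"
  assumes c: "continuous_on UNIV h" and nn: "\<And>x. h x \<ge> 0" and i: "integrable lborel h"
    and x0: "h x0 > 0"
  shows "integral\<^sup>L lborel h > 0"
proof -
  have "isCont h x0" using c by (simp add: continuous_on_eq_continuous_at)
  then obtain e where e: "e > 0" "\<forall>y. dist y x0 < e \<longrightarrow> dist (h y) (h x0) < h x0 / 2"
    using x0 unfolding continuous_at_eps_delta by (metis half_gt_zero)
  have le: "h x0 / 2 * indicator (ball x0 e) y \<le> h y" for y
  proof (cases "y \<in> ball x0 e")
    case True
    then have "dist y x0 < e" by (simp add: dist_commute)
    then have "dist (h y) (h x0) < h x0 / 2" using e by blast
    then show ?thesis using True by (auto simp: dist_real_def abs_if split: if_splits)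
  qed (use nn in auto)
  have ib: "integrable lborel (\<lambda>y. h x0 / 2 * indicator (ball x0 e) y :: real)"
    by (intro integrable_mult_right integrable_real_indicator) (use emeasure_lborel_ball_finite[of x0 e] in auto)
  have "0 < h x0 / 2 * measure lborel (ball x0 e)"
    using x0 content_ball_pos[OF e(1)] by simp
  also have "\<dots> = (\<integral>y. h x0 / 2 * indicator (ball x0 e) y \<partial>lborel)"
    by simp
  also have "\<dots> \<le> integral\<^sup>L lborel h"
    by (rule Bochner_Integration.integral_mono[OF ib i]) (use le in auto)
  finally show ?thesis .
qed

lemma ln_ratio:
  "ln (Dn a \<theta> x / Dn a0 \<theta>0 x) = ln (cosh (a + \<theta> \<bullet> x)) - ln (cosh (a0 + \<theta>0 \<bullet> x))
      - ln (cosh a) - \<theta> \<bullet> \<theta> / 2 + ln (cosh a0) + \<theta>0 \<bullet> \<theta>0 / 2"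
proof -
  have g: "std_gauss_density x > 0" by (rule gauss_pos)
  have "Dn a \<theta> x / Dn a0 \<theta>0 x = cosh (a + \<theta> \<bullet> x) / cosh (a0 + \<theta>0 \<bullet> x) * cosh a0 * exp (\<theta>0 \<bullet> \<theta>0 / 2)
       / (cosh a * exp (\<theta> \<bullet> \<theta> / 2))"
    unfolding Dn_def using g by (simp add: field_simps)
  also have "ln \<dots> = ln (cosh (a + \<theta> \<bullet> x)) - ln (cosh (a0 + \<theta>0 \<bullet> x)) + ln (cosh a0) + \<theta>0 \<bullet> \<theta>0 / 2
       - (ln (cosh a) + \<theta> \<bullet> \<theta> / 2)"
    by (simp add: ln_div ln_mult)
  finally show ?thesis by simp
qed

lemma ratio_integrable:
  "integrable lborel (\<lambda>x. ln (Dn a \<theta> x / Dn a0 \<theta>0 x) * Dn a0 \<theta>0 x)"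
proof -
  let ?K = "- ln (cosh a) - \<theta> \<bullet> \<theta> / 2 + ln (cosh a0) + \<theta>0 \<bullet> \<theta>0 / 2"
  have "integrable lborel (\<lambda>x. ln (cosh (a + \<theta> \<bullet> x)) * Dn a0 \<theta>0 x - ln (cosh (a0 + \<theta>0 \<bullet> x)) * Dn a0 \<theta>0 x
      + ?K * Dn a0 \<theta>0 x)"
    using lncosh_Dn_integrable Dn_integrable
    by (intro Bochner_Integration.integrable_add Bochner_Integration.integrable_diff integrable_mult_right) auto
  then show ?thesis unfolding ln_ratio by (simp add: algebra_simps)
qed

lemma gibbs:
  "(\<integral>x. ln (Dn a \<theta> x / Dn a0 \<theta>0 x) * Dn a0 \<theta>0 x \<partial>lborel) \<le> 0"
  "(\<exists>x0. Dn a \<theta> x0 \<noteq> Dn a0 \<theta>0 x0) \<Longrightarrow> (\<integral>x. ln (Dn a \<theta> x / Dn a0 \<theta>0 x) * Dn a0 \<theta>0 x \<partial>lborel) < 0"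
proof -
  let ?D = "Dn a \<theta>" and ?p = "Dn a0 \<theta>0"
  let ?h = "\<lambda>x. ?D x - ?p x - ln (?D x / ?p x) * ?p x"
  have pt: "ln (?D x / ?p x) * ?p x \<le> ?D x - ?p x" for x
  proof -
    have "ln (?D x / ?p x) \<le> ?D x / ?p x - 1"
      using Dn_pos[of a \<theta> x] Dn_pos[of a0 \<theta>0 x] by (intro ln_le_minus_one divide_pos_pos) auto
    then have "ln (?D x / ?p x) * ?p x \<le> (?D x / ?p x - 1) * ?p x"
      using Dn_pos[of a0 \<theta>0 x] by (intro mult_right_mono) auto
    also have "\<dots> = ?D x - ?p x" using Dn_pos[of a0 \<theta>0 x] by (simp add: field_simps)
    finally show ?thesis .
  qed
  have iD: "integrable lborel (\<lambda>x. ?D x - ?p x)"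
    using Dn_integrable by (intro Bochner_Integration.integrable_diff) auto
  have iD0: "(\<integral>x. ?D x - ?p x \<partial>lborel) = 0"
    by (simp add: Bochner_Integration.integral_diff[OF Dn_integrable Dn_integrable] Dn_integral)
  have ih: "integrable lborel ?h" by (rule Bochner_Integration.integrable_diff[OF iD ratio_integrable])
  have ih0: "integral\<^sup>L lborel ?h = - (\<integral>x. ln (Dn a \<theta> x / Dn a0 \<theta>0 x) * Dn a0 \<theta>0 x \<partial>lborel)"
    using iD0 by (simp add: Bochner_Integration.integral_diff[OF iD ratio_integrable])
  show "(\<integral>x. ln (Dn a \<theta> x / Dn a0 \<theta>0 x) * Dn a0 \<theta>0 x \<partial>lborel) \<le> 0"
  proof -
    have "(\<integral>x. ln (Dn a \<theta> x / Dn a0 \<theta>0 x) * Dn a0 \<theta>0 x \<partial>lborel) \<le> (\<integral>x. ?D x - ?p x \<partial>lborel)"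
      by (rule Bochner_Integration.integral_mono[OF ratio_integrable iD]) (use pt in auto)
    then show ?thesis using iD0 by simp
  qed
  assume "\<exists>x0. Dn a \<theta> x0 \<noteq> Dn a0 \<theta>0 x0"
  then obtain x0 where x0: "?D x0 \<noteq> ?p x0" by blast
  have cont: "continuous_on UNIV ?h"
  proof -
    have np: "\<And>a \<theta> x. Dn a \<theta> x \<noteq> 0" using Dn_pos by (metis less_irrefl)
    show ?thesis by (intro continuous_intros Dn_cont) (auto simp: np)
  qed
  have nn: "?h x \<ge> 0" for x using pt[of x] by simp
  have "?h x0 > 0"
  proof -
    let ?t = "?D x0 / ?p x0"
    have t: "?t > 0" "?t \<noteq> 1" using Dn_pos[of a \<theta> x0] Dn_pos[of a0 \<theta>0 x0] x0 by auto
    have "ln ?t \<noteq> ?t - 1" using ln_eq_minus_one[of ?t] t by auto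
    then have "ln ?t < ?t - 1" using ln_le_minus_one[of ?t] t by auto
    then have "ln ?t * ?p x0 < (?t - 1) * ?p x0"
      using Dn_pos[of a0 \<theta>0 x0] by (intro mult_strict_right_mono) auto
    also have "\<dots> = ?D x0 - ?p x0" using Dn_pos[of a0 \<theta>0 x0] by (simp add: field_simps)
    finally show ?thesis by simp
  qed
  from pos_integral[OF cont nn ih this] ih0
  show "(\<integral>x. ln (Dn a \<theta> x / Dn a0 \<theta>0 x) * Dn a0 \<theta>0 x \<partial>lborel) < 0" by simp
qed



lemma theta1_neg:
  fixes \<theta> \<theta>0 :: "real ^ 'n::{finite,linorder}"
  assumes "\<theta> \<in> Theta1" "\<theta>0 \<in> Theta1"
  shows "- \<theta> \<noteq> \<theta>0"
proof
  assume e: "- \<theta> = \<theta>0"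
  obtain i where i: "\<theta> $ i > 0" "\<forall>j<i. \<theta> $ j = 0" using assms(1) unfolding Theta1_def by blast
  obtain k where k: "\<theta>0 $ k > 0" "\<forall>j<k. \<theta>0 $ j = 0" using assms(2) unfolding Theta1_def by blast
  have k': "\<theta> $ k < 0" "\<forall>j<k. \<theta> $ j = 0" using k e by auto
  show False
  proof (cases i k rule: linorder_cases)
    case less then show ?thesis using i k' by auto
  next
    case equal then show ?thesis using i k' by auto
  next
    case greater then show ?thesis using i k' by auto
  qed
qed

lemma Dn_neg: "Dn (-a) \<theta> x = Dn a (-\<theta>) x"
proof -
  have "cosh (- a + \<theta> \<bullet> x) = cosh (a + (-\<theta>) \<bullet> x)"
  proof -
    have "- a + \<theta> \<bullet> x = - (a + (-\<theta>) \<bullet> x)" by simp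
    then show ?thesis by (simp only: cosh_minus)
  qed
  then show ?thesis unfolding Dn_def by simp
qed

lemma Dn_differ:
  fixes \<theta>' \<theta>0 :: "real^'n"
  assumes a: "a > 0" and ne: "\<theta>' \<noteq> \<theta>0"
  shows "\<exists>x0. Dn a \<theta>' x0 \<noteq> Dn a \<theta>0 x0"
proof (rule ccontr)
  assume "\<not> ?thesis"
  then have eq: "\<And>x. Dn a \<theta>' x = Dn a \<theta>0 x" by auto
  have g0: "std_gauss_density (0::real^'n) > 0" by (rule gauss_pos)
  have "exp (\<theta>' \<bullet> \<theta>' / 2) = exp (\<theta>0 \<bullet> \<theta>0 / 2)"
    using eq[of 0] g0 unfolding Dn_def by (auto simp: field_simps)
  then have nn: "\<theta>' \<bullet> \<theta>' = \<theta>0 \<bullet> \<theta>0" by simp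
  define x where "x = \<theta>' - \<theta>0"
  have "cosh (a + \<theta>' \<bullet> x) = cosh (a + \<theta>0 \<bullet> x)"
    using eq[of x] gauss_pos[of x] unfolding Dn_def nn by (simp add: field_simps)
  then have ab: "\<bar>a + \<theta>' \<bullet> x\<bar> = \<bar>a + \<theta>0 \<bullet> x\<bar>" by simp
  have s: "\<theta>0 \<bullet> x = - (\<theta>' \<bullet> x)"
    unfolding x_def using nn by (simp add: inner_diff_right inner_commute)
  have "\<theta>' \<bullet> x - \<theta>0 \<bullet> x = x \<bullet> x" unfolding x_def by (simp add: inner_diff_left inner_commute)
  moreover have "x \<bullet> x > 0" using ne unfolding x_def by simp
  ultimately have t: "\<theta>' \<bullet> x > 0" using s by linarith
  have "\<bar>a + \<theta>' \<bullet> x\<bar> = \<bar>a - \<theta>' \<bullet> x\<bar>" using ab s by simp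
  moreover have "\<bar>a - \<theta>' \<bullet> x\<bar> < a + \<theta>' \<bullet> x" using t a by (simp add: abs_less_iff)
  moreover have "\<bar>a + \<theta>' \<bullet> x\<bar> = a + \<theta>' \<bullet> x" using t a by simp
  ultimately show False by linarith
qed

lemma M_diff:
  fixes \<theta>0 \<theta> :: "real ^ 'n::{finite,linorder}"
  assumes b: "\<beta> > 1"
  shows "M_infty \<beta> \<theta>0 u \<theta> - M_infty \<beta> \<theta>0 (mag \<beta>) \<theta>0 =
    gC \<beta> u - gC \<beta> (mag \<beta>) - (\<integral>x. ln (Dn (\<beta> * u) \<theta> x / Dn (\<beta> * mag \<beta>) \<theta>0 x) * Dn (\<beta> * mag \<beta>) \<theta>0 x \<partial>lborel)"
proof -
  let ?m = "mag \<beta>"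
  let ?a = "\<beta> * u"
  let ?b = "\<beta> * ?m"
  let ?p = "Dn ?b \<theta>0"
  have mp: "mix_density \<beta> \<theta>0 = ?p" using mix_Dn[OF mag_props(2)[OF b]] by auto
  let ?I = "\<lambda>a t. (\<integral>x. ln (cosh (a + t \<bullet> x)) * ?p x \<partial>lborel)"
  have ME: "M_infty \<beta> \<theta>0 v t = t \<bullet> t / 2 + \<beta> * v\<^sup>2 / 2 - ?I (\<beta> * v) t" for v t
    unfolding M_infty_def mix_expect_def mp ..
  let ?K = "- ln (cosh ?a) - \<theta> \<bullet> \<theta> / 2 + ln (cosh ?b) + \<theta>0 \<bullet> \<theta>0 / 2"
  have "(\<integral>x. ln (Dn ?a \<theta> x / ?p x) * ?p x \<partial>lborel)
      = (\<integral>x. ln (cosh (?a + \<theta> \<bullet> x)) * ?p x - ln (cosh (?b + \<theta>0 \<bullet> x)) * ?p x + ?K * ?p x \<partial>lborel)"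
    unfolding ln_ratio by (rule Bochner_Integration.integral_cong) (auto simp: algebra_simps)
  also have "\<dots> = ?I ?a \<theta> - ?I ?b \<theta>0 + ?K * 1"
    apply (subst Bochner_Integration.integral_add)
      apply (intro Bochner_Integration.integrable_diff lncosh_Dn_integrable)
     apply (intro integrable_mult_right Dn_integrable)
    apply (subst Bochner_Integration.integral_diff)
      apply (intro lncosh_Dn_integrable)
     apply (intro lncosh_Dn_integrable)
    by (simp add: Dn_integral)
  finally have "(\<integral>x. ln (Dn ?a \<theta> x / ?p x) * ?p x \<partial>lborel) = ?I ?a \<theta> - ?I ?b \<theta>0 + ?K" by simp
  moreover have "M_infty \<beta> \<theta>0 u \<theta> = \<theta> \<bullet> \<theta> / 2 + \<beta> * u\<^sup>2 / 2 - ?I ?a \<theta>" by (rule ME)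
  moreover have "M_infty \<beta> \<theta>0 ?m \<theta>0 = \<theta>0 \<bullet> \<theta>0 / 2 + \<beta> * ?m\<^sup>2 / 2 - ?I ?b \<theta>0" by (rule ME)
  moreover have "gC \<beta> u = \<beta> * u\<^sup>2 / 2 - ln (cosh ?a)" "gC \<beta> ?m = \<beta> * ?m\<^sup>2 / 2 - ln (cosh ?b)"
    unfolding gC_def by simp_all
  ultimately show ?thesis by linarith
qed

theorem mainTheorem7:
  fixes \<beta> :: real and \<theta>0 :: "real ^ 'n::{finite,linorder}"
  assumes "\<beta> > 1" and "\<theta>0 \<in> Theta1"
  shows "mag \<beta> \<in> {-1..1} \<and>
         (\<forall>u\<in>{-1..1}. \<forall>\<theta>\<in>Theta1. (u, \<theta>) \<noteq> (mag \<beta>, \<theta>0) \<longrightarrow>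
            M_infty \<beta> \<theta>0 (mag \<beta>) \<theta>0 < M_infty \<beta> \<theta>0 u \<theta>)"
proof -
  note mp = mag_props[OF assms(1)]
  have "mag \<beta> \<in> {-1..1}"
    using mp(2) tanh_real_lt_1[of "\<beta> * mag \<beta>"] tanh_real_gt_neg1[of "\<beta> * mag \<beta>"] by simp
  moreover have "M_infty \<beta> \<theta>0 (mag \<beta>) \<theta>0 < M_infty \<beta> \<theta>0 u \<theta>"
    if u: "u \<in> {-1..1}" and th: "\<theta> \<in> Theta1" and ne: "(u, \<theta>) \<noteq> (mag \<beta>, \<theta>0)" for u \<theta>
  proof -
    let ?J = "(\<integral>x. ln (Dn (\<beta> * u) \<theta> x / Dn (\<beta> * mag \<beta>) \<theta>0 x) * Dn (\<beta> * mag \<beta>) \<theta>0 x \<partial>lborel)"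
    note d = M_diff[OF assms(1), of \<theta>0 u \<theta>]
    have a0: "\<beta> * mag \<beta> > 0" using mp(1) assms(1) by simp
    show ?thesis
    proof (cases "u = mag \<beta> \<or> u = - mag \<beta>")
      case False
      then have "gC \<beta> u > gC \<beta> (mag \<beta>)" using gC_min[OF assms(1)] by auto
      moreover have "?J \<le> 0" by (rule gibbs(1))
      ultimately show ?thesis using d by simp
    next
      case True
      have "\<exists>x0. Dn (\<beta> * u) \<theta> x0 \<noteq> Dn (\<beta> * mag \<beta>) \<theta>0 x0"
      proof (cases "u = mag \<beta>")
        case True
        then have "\<theta> \<noteq> \<theta>0" using ne by auto
        then show ?thesis using Dn_differ[OF a0] True by auto
      next
        case False
        then have u': "u = - mag \<beta>" using \<open>u = mag \<beta> \<or> u = - mag \<beta>\<close> by auto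
        have "- \<theta> \<noteq> \<theta>0" by (rule theta1_neg[OF th assms(2)])
        then obtain x0 where "Dn (\<beta> * mag \<beta>) (-\<theta>) x0 \<noteq> Dn (\<beta> * mag \<beta>) \<theta>0 x0"
          using Dn_differ[OF a0] by blast
        then show ?thesis using u' Dn_neg[of "\<beta> * mag \<beta>" \<theta>] by auto
      qed
      then have "?J < 0" by (rule gibbs(2))
      moreover have "gC \<beta> u = gC \<beta> (mag \<beta>)" using True gC_even by auto
      ultimately show ?thesis using d by simp
    qed
  qed
  ultimately show ?thesis by blast
qed

end
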